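(* Let $D$ be an integral domain, $T$ an overring of $D$, $\star$ a semistar operation on $D$ and $\star'$ a semistar operation on $T$ with $T^{\star'}=T$. If $T$ is $(\star,\star')$-linked to $D$, then $T^{\ell_{\star,T}}=T$.
   Context: Let $D$ be an integral domain with quotient field $K$. $\overline{\mathbf F}(D)$ denotes the set of all nonzero $D$-submodules of $K$ and $\mathbf f(D)$ the set of nonzero finitely generated $D$-submodules of $K$. A semistar operation on $D$ is a map $\star:\overline{\mathbf F}(D)\to\overline{\mathbf F}(D)$, $E\mapsto E^\star$, such that for all $0\ne x\in K$ and $E,F\in\overline{\mathbf F}(D)$: (1) $(xE)^\star=xE^\star$; (2) $E\subseteq F\Rightarrow E^\star\subseteq F^\star$; (3) $E\subseteq E^\star$ and $(E^\star)^\star=E^\star$. $\star_f$ is defined by $E^{\star_f}=\bigcup\{F^\star:F\in\mathbf f(D),F\subseteq E\}$. A nonzero ideal $I$ of $D$ is a quasi-$\star$-ideal if $I^\star\cap D=I$; a quasi-$\star$-prime is a prime quasi-$\star$-ideal. An overring of $D$ is a ring $T$ with $D\subseteq T\subseteq K$; semistar operations on $T$ are defined likewise. $T$ is $(\star,\star')$-linked to $D$ if for every nonzero finitely generated ideal $F\subseteq D$ with $F^\star=D^\star$ one has $(FT)^{\star'}=T^{\star'}$. The semistar operation $\ell_{\star,T}$ on $T$ is defined by $E^{\ell_{\star,T}}=\bigcap\{ET_{D\setminus P}: P$ a quasi-$\star_f$-prime ideal of $D\}$ for $E\in\overline{\mathbf F}(T)$ (equal to $K$ if there are none). *)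

theory Defs
  imports Main
begin

text \<open>The quotient field K is modelled as a type 'a of class field; rings D, T are
subsets of it.\<close>

definition subring :: "'a::field set \<Rightarrow> bool" where
  "subring R \<longleftrightarrow> 0 \<in> R \<and> 1 \<in> R \<and> (\<forall>x\<in>R. \<forall>y\<in>R. x + y \<in> R \<and> x - y \<in> R \<and> x * y \<in> R)"

text \<open>D is an integral domain whose quotient field is the ambient field (all of UNIV).\<close>
definition domain_with_qf :: "'a::field set \<Rightarrow> bool" where
  "domain_with_qf D \<longleftrightarrow> subring D \<and> (\<forall>x. \<exists>a\<in>D. \<exists>b\<in>D. b \<noteq> 0 \<and> x = a / b)"

definition overring :: "'a::field set \<Rightarrow> 'a set \<Rightarrow> bool" where
  "overring D T \<longleftrightarrow> subring T \<and> D \<subseteq> T"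

inductive_set sprod :: "'a::field set \<Rightarrow> 'a set \<Rightarrow> 'a set" for A B where
  zero: "0 \<in> sprod A B"
| prod: "a \<in> A \<Longrightarrow> b \<in> B \<Longrightarrow> a * b \<in> sprod A B"
| add: "x \<in> sprod A B \<Longrightarrow> y \<in> sprod A B \<Longrightarrow> x + y \<in> sprod A B"

definition submod :: "'a::field set \<Rightarrow> 'a set \<Rightarrow> bool" where
  "submod R E \<longleftrightarrow> 0 \<in> E \<and> (\<forall>x\<in>E. \<forall>y\<in>E. x + y \<in> E) \<and> (\<forall>r\<in>R. \<forall>x\<in>E. r * x \<in> E)"

definition Fbar :: "'a::field set \<Rightarrow> 'a set set" where
  "Fbar R = {E. submod R E \<and> E \<noteq> {0}}"

definition ffg :: "'a::field set \<Rightarrow> 'a set set" where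
  "ffg R = {E. E \<in> Fbar R \<and> (\<exists>G. finite G \<and> E = sprod R G)}"

definition smul :: "'a::field \<Rightarrow> 'a set \<Rightarrow> 'a set" where
  "smul x E = (\<lambda>e. x * e) ` E"

definition semistar :: "'a::field set \<Rightarrow> ('a set \<Rightarrow> 'a set) \<Rightarrow> bool" where
  "semistar R st \<longleftrightarrow>
     (\<forall>E\<in>Fbar R. st E \<in> Fbar R) \<and>
     (\<forall>x E. x \<noteq> 0 \<longrightarrow> E \<in> Fbar R \<longrightarrow> st (smul x E) = smul x (st E)) \<and>
     (\<forall>E\<in>Fbar R. \<forall>F\<in>Fbar R. E \<subseteq> F \<longrightarrow> st E \<subseteq> st F) \<and>
     (\<forall>E\<in>Fbar R. E \<subseteq> st E \<and> st (st E) = st E)"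

definition star_f :: "'a::field set \<Rightarrow> ('a set \<Rightarrow> 'a set) \<Rightarrow> 'a set \<Rightarrow> 'a set" where
  "star_f R st E = \<Union>{st F | F. F \<in> ffg R \<and> F \<subseteq> E}"

definition ideal_of :: "'a::field set \<Rightarrow> 'a set \<Rightarrow> bool" where
  "ideal_of D I \<longleftrightarrow> I \<subseteq> D \<and> submod D I"

definition quasi_star_ideal :: "'a::field set \<Rightarrow> ('a set \<Rightarrow> 'a set) \<Rightarrow> 'a set \<Rightarrow> bool" where
  "quasi_star_ideal D st I \<longleftrightarrow> ideal_of D I \<and> I \<noteq> {0} \<and> st I \<inter> D = I"

definition prime_ideal_of :: "'a::field set \<Rightarrow> 'a set \<Rightarrow> bool" where
  "prime_ideal_of D P \<longleftrightarrow> ideal_of D P \<and> P \<noteq> D \<and>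
     (\<forall>a\<in>D. \<forall>b\<in>D. a * b \<in> P \<longrightarrow> a \<in> P \<or> b \<in> P)"

definition quasi_star_prime :: "'a::field set \<Rightarrow> ('a set \<Rightarrow> 'a set) \<Rightarrow> 'a set \<Rightarrow> bool" where
  "quasi_star_prime D st P \<longleftrightarrow> quasi_star_ideal D st P \<and> prime_ideal_of D P"

definition loc :: "'a::field set \<Rightarrow> 'a set \<Rightarrow> 'a set \<Rightarrow> 'a set" where
  "loc T D P = {t / s | t s. t \<in> T \<and> s \<in> D \<and> s \<notin> P}"

definition linked :: "'a::field set \<Rightarrow> ('a set \<Rightarrow> 'a set) \<Rightarrow> 'a set \<Rightarrow> ('a set \<Rightarrow> 'a set) \<Rightarrow> bool" where
  "linked D st T st' \<longleftrightarrow>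
     (\<forall>F. ideal_of D F \<and> F \<noteq> {0} \<and> (\<exists>G. finite G \<and> F = sprod D G) \<and> st F = st D
        \<longrightarrow> st' (sprod F T) = st' T)"

text \<open>\<open>\<ell>_{\<star>,T}\<close>; an empty intersection is the whole field K = UNIV.\<close>
definition ell :: "'a::field set \<Rightarrow> ('a set \<Rightarrow> 'a set) \<Rightarrow> 'a set \<Rightarrow> 'a set \<Rightarrow> 'a set" where
  "ell D st T E = \<Inter>{sprod E (loc T D P) | P. quasi_star_prime D (star_f D st) P}"

end

theory Submission imports Defs begin

lemma sprod_subset:
  assumes "submod R E" "A \<subseteq> R" "B \<subseteq> E" shows "sprod A B \<subseteq> E"
proof
  fix x assume "x \<in> sprod A B" then show "x \<in> E"
  proof induct
    case (prod a b) then show ?case using assms unfolding submod_def by blast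
  qed (use assms in \<open>auto simp: submod_def\<close>)
qed

lemma sprod_subset2:
  assumes "submod R E" "A \<subseteq> E" "B \<subseteq> R" shows "sprod A B \<subseteq> E"
proof
  fix x assume "x \<in> sprod A B" then show "x \<in> E"
  proof induct
    case (prod a b) then show ?case using assms unfolding submod_def
      by (metis mult.commute subsetD)
  qed (use assms in \<open>auto simp: submod_def\<close>)
qed

lemma sprod_submod_left:
  assumes "\<forall>r\<in>R. \<forall>a\<in>A. r*a \<in> A" shows "submod R (sprod A B)"
proof -
  have "r * x \<in> sprod A B" if "r \<in> R" "x \<in> sprod A B" for r x
    using that(2)
  proof induct
    case zero then show ?case by (simp add: sprod.zero)
  next
    case (prod a b) then show ?case using assms that(1)
      by (metis mult.assoc sprod.prod)
  next
    case (add x y) then show ?case by (simp add: distrib_left sprod.add)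
  qed
  then show ?thesis unfolding submod_def by (auto intro: sprod.intros)
qed

lemma sprod_submod_right:
  assumes "\<forall>r\<in>R. \<forall>b\<in>B. r*b \<in> B" shows "submod R (sprod A B)"
proof -
  have "r * x \<in> sprod A B" if "r \<in> R" "x \<in> sprod A B" for r x
    using that(2)
  proof induct
    case zero then show ?case by (simp add: sprod.zero)
  next
    case (prod a b)
    have "r * (a * b) = a * (r * b)" by (simp add: algebra_simps)
    then show ?case using assms that(1) prod by (metis sprod.prod)
  next
    case (add x y) then show ?case by (simp add: distrib_left sprod.add)
  qed
  then show ?thesis unfolding submod_def by (auto intro: sprod.intros)
qed

lemma sprod_mono:
  assumes "A \<subseteq> A'" "B \<subseteq> B'" shows "sprod A B \<subseteq> sprod A' B'"
proof
  fix x assume "x \<in> sprod A B" then show "x \<in> sprod A' B'"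
    by induct (use assms in \<open>auto intro: sprod.intros\<close>)
qed

lemma sprod_gen: "1 \<in> R \<Longrightarrow> G \<subseteq> sprod R G"
  using sprod.prod[of 1 R] by fastforce

lemma sprod_zero_gens:
  assumes "G \<subseteq> {0}" shows "sprod A G \<subseteq> {0}"
proof
  fix x assume "x \<in> sprod A G" then show "x \<in> {0}"
    by induct (use assms in auto)
qed

lemma submod_nonzero: "E \<in> Fbar R \<Longrightarrow> \<exists>e\<in>E. e \<noteq> 0"
  unfolding Fbar_def submod_def by auto

lemma Fbar_I: "submod R E \<Longrightarrow> e \<in> E \<Longrightarrow> e \<noteq> 0 \<Longrightarrow> E \<in> Fbar R"
  unfolding Fbar_def by auto

lemma submod_mult: "submod R E \<Longrightarrow> r \<in> R \<Longrightarrow> x \<in> E \<Longrightarrow> r * x \<in> E"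
  unfolding submod_def by auto
lemma submod_add: "submod R E \<Longrightarrow> y \<in> E \<Longrightarrow> x \<in> E \<Longrightarrow> x + y \<in> E"
  unfolding submod_def by auto
lemma submod_0: "submod R E \<Longrightarrow> 0 \<in> E"
  unfolding submod_def by auto

lemma smul_Fbar:
  assumes "E \<in> Fbar R" "x \<noteq> 0" shows "smul x E \<in> Fbar R"
proof -
  obtain e where e: "e \<in> E" "e \<noteq> 0" using submod_nonzero[OF assms(1)] by blast
  have sm: "submod R E" using assms(1) by (simp add: Fbar_def)
  have "submod R (smul x E)" unfolding submod_def smul_def
  proof (intro conjI ballI)
    show "0 \<in> (*) x ` E" using submod_0[OF sm] by force
  next
    fix a b assume "a \<in> (*) x ` E" "b \<in> (*) x ` E"
    then show "a + b \<in> (*) x ` E" using submod_add[OF sm]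
      by (auto simp: distrib_left[symmetric])
  next
    fix r a assume "r \<in> R" "a \<in> (*) x ` E"
    then obtain f where "f \<in> E" "a = x * f" by auto
    then have "r * a = x * (r * f)" by (simp add: algebra_simps)
    then show "r * a \<in> (*) x ` E" using submod_mult[OF sm \<open>r \<in> R\<close> \<open>f \<in> E\<close>] by auto
  qed
  moreover have "x * e \<in> smul x E" "x * e \<noteq> 0" using e assms(2) by (auto simp: smul_def)
  ultimately show ?thesis by (rule Fbar_I)
qed

locale ssr =
  fixes R :: "'a::field set" and st :: "'a set \<Rightarrow> 'a set"
  assumes ss: "semistar R st"
begin
lemma ss1: "\<forall>E\<in>Fbar R. st E \<in> Fbar R" using ss unfolding semistar_def by (rule conjunct1)
lemma ss2: "\<forall>x E. x \<noteq> 0 \<longrightarrow> E \<in> Fbar R \<longrightarrow> st (smul x E) = smul x (st E)"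
  using ss unfolding semistar_def by (elim conjE)
lemma ss3: "\<forall>E\<in>Fbar R. \<forall>F\<in>Fbar R. E \<subseteq> F \<longrightarrow> st E \<subseteq> st F"
  using ss unfolding semistar_def by (elim conjE)
lemma ss4: "\<forall>E\<in>Fbar R. E \<subseteq> st E \<and> st (st E) = st E"
  using ss unfolding semistar_def by (elim conjE)
lemma st_Fbar: "E \<in> Fbar R \<Longrightarrow> st E \<in> Fbar R" using ss1 by (rule bspec)
lemma st_submod: "E \<in> Fbar R \<Longrightarrow> submod R (st E)"
  using st_Fbar unfolding Fbar_def by (metis (mono_tags, lifting) mem_Collect_eq)
lemma st_smul: "x \<noteq> 0 \<Longrightarrow> E \<in> Fbar R \<Longrightarrow> st (smul x E) = smul x (st E)"
  using ss2 by simp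
lemma st_mono: "E \<in> Fbar R \<Longrightarrow> F \<in> Fbar R \<Longrightarrow> E \<subseteq> F \<Longrightarrow> st E \<subseteq> st F"
  using ss3 by simp
lemma st_ext: "E \<in> Fbar R \<Longrightarrow> E \<subseteq> st E"
  using ss4 by simp
lemma st_idem: "E \<in> Fbar R \<Longrightarrow> st (st E) = st E"
  using ss4 by simp
lemma st_absorb: "E \<in> Fbar R \<Longrightarrow> F \<in> Fbar R \<Longrightarrow> E \<subseteq> st F \<Longrightarrow> st E \<subseteq> st F"
  by (metis st_Fbar st_idem st_mono)
end


lemma subring_mult: "subring D \<Longrightarrow> x \<in> D \<Longrightarrow> y \<in> D \<Longrightarrow> x * y \<in> D"
  unfolding subring_def by blast
lemma subring_add: "subring D \<Longrightarrow> x \<in> D \<Longrightarrow> y \<in> D \<Longrightarrow> x + y \<in> D"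
  unfolding subring_def by blast
lemma subring_1: "subring D \<Longrightarrow> 1 \<in> D" unfolding subring_def by blast
lemma subring_0: "subring D \<Longrightarrow> 0 \<in> D" unfolding subring_def by blast
lemma subring_submod: "subring D \<Longrightarrow> submod D D"
  unfolding subring_def submod_def by blast
lemma subring_Fbar: "subring D \<Longrightarrow> D \<in> Fbar D"
  by (rule Fbar_I[of D D 1]) (auto simp: subring_submod subring_1)

locale sd = ssr D st for D :: "'a::field set" and st +
  assumes sr: "subring D"
begin

lemma sprodD_submod: "submod D (sprod D G)"
  by (rule sprod_submod_left) (auto simp: subring_mult[OF sr])

lemma ffg_I: "finite G \<Longrightarrow> sprod D G \<noteq> {0} \<Longrightarrow> sprod D G \<in> ffg D"
  unfolding ffg_def Fbar_def using sprodD_submod by blast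

lemma ffg_Fbar: "F \<in> ffg D \<Longrightarrow> F \<in> Fbar D" by (simp add: ffg_def)

lemma principal_ffg: "p \<noteq> 0 \<Longrightarrow> sprod D {p} \<in> ffg D"
proof (rule ffg_I)
  assume "p \<noteq> 0"
  have "p \<in> sprod D {p}" using sprod_gen[OF subring_1[OF sr], of "{p}"] by blast
  then show "sprod D {p} \<noteq> {0}" using \<open>p \<noteq> 0\<close> by blast
qed simp

lemma star_f_directed:
  assumes P: "submod D P" "p0 \<in> P" "p0 \<noteq> 0" and G: "finite G" "G \<subseteq> star_f D st P"
  shows "\<exists>F\<in>ffg D. F \<subseteq> P \<and> G \<subseteq> st F"
  using G
proof induct
  case empty
  have "sprod D {p0} \<subseteq> P" by (rule sprod_subset[OF P(1)]) (use P in auto)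
  then show ?case using principal_ffg[OF P(3)] by blast
next
  case (insert g G)
  then obtain F' where F': "F' \<in> ffg D" "F' \<subseteq> P" "G \<subseteq> st F'" by auto
  from insert(4) obtain Fg where Fg: "Fg \<in> ffg D" "Fg \<subseteq> P" "g \<in> st Fg"
    unfolding star_f_def by auto
  obtain G1 where G1: "finite G1" "F' = sprod D G1" using F'(1) unfolding ffg_def by auto
  obtain G2 where G2: "finite G2" "Fg = sprod D G2" using Fg(1) unfolding ffg_def by auto
  define F where "F = sprod D (G1 \<union> G2)"
  have sub1: "F' \<subseteq> F" "Fg \<subseteq> F" unfolding F_def G1(2) G2(2) by (rule sprod_mono; blast)+
  have "F \<noteq> {0}" using sub1 submod_nonzero[OF ffg_Fbar[OF F'(1)]] by auto
  then have F: "F \<in> ffg D" unfolding F_def using G1 G2 by (intro ffg_I) auto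
  have "G1 \<union> G2 \<subseteq> P" using sprod_gen[OF subring_1[OF sr], of G1] sprod_gen[OF subring_1[OF sr], of G2]
      F'(2) Fg(2) G1 G2 by auto
  then have "F \<subseteq> P" unfolding F_def by (intro sprod_subset[OF P(1)]) auto
  moreover have "st F' \<subseteq> st F" "st Fg \<subseteq> st F"
    using sub1 st_mono ffg_Fbar F F'(1) Fg(1) by auto
  ultimately show ?case using F F'(3) Fg(3) by blast
qed

lemma star_f_elem: "F \<in> ffg D \<Longrightarrow> F \<subseteq> P \<Longrightarrow> x \<in> st F \<Longrightarrow> x \<in> star_f D st P"
  unfolding star_f_def by blast

lemma star_f_ext: assumes "submod D P" "p0 \<in> P" "p0 \<noteq> 0" shows "P \<subseteq> star_f D st P"
proof
  fix p assume p: "p \<in> P"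
  have gen: "q \<in> P \<Longrightarrow> sprod D {q} \<subseteq> P" for q by (rule sprod_subset[OF assms(1)]) auto
  show "p \<in> star_f D st P"
  proof (cases "p = 0")
    case False
    have "p \<in> st (sprod D {p})"
      using st_ext[OF ffg_Fbar[OF principal_ffg[OF False]]] sprod_gen[OF subring_1[OF sr], of "{p}"] by auto
    then show ?thesis using star_f_elem[OF principal_ffg[OF False] gen[OF p]] by blast
  next
    case True
    have "0 \<in> st (sprod D {p0})"
      using submod_0[OF st_submod[OF ffg_Fbar[OF principal_ffg[OF assms(3)]]]] .
    then show ?thesis using star_f_elem[OF principal_ffg[OF assms(3)] gen[OF assms(2)]] True by blast
  qed
qed

lemma star_f_submod: assumes P: "submod D P" "p0 \<in> P" "p0 \<noteq> 0" shows "submod D (star_f D st P)"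
  unfolding submod_def
proof (intro conjI ballI)
  show "0 \<in> star_f D st P" using star_f_ext[OF P] submod_0[OF P(1)] by blast
next
  fix x y assume "x \<in> star_f D st P" "y \<in> star_f D st P"
  then obtain F where F: "F \<in> ffg D" "F \<subseteq> P" "{x,y} \<subseteq> st F"
    using star_f_directed[OF P, of "{x,y}"] by auto
  then have "x + y \<in> st F" using submod_add[OF st_submod[OF ffg_Fbar[OF F(1)]]] by auto
  then show "x + y \<in> star_f D st P" using star_f_elem F by blast
next
  fix r x assume "r \<in> D" "x \<in> star_f D st P"
  then obtain F where F: "F \<in> ffg D" "F \<subseteq> P" "x \<in> st F" unfolding star_f_def by auto
  then have "r * x \<in> st F" using submod_mult[OF st_submod[OF ffg_Fbar[OF F(1)]] \<open>r \<in> D\<close>] by auto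
  then show "r * x \<in> star_f D st P" using star_f_elem F by blast
qed

lemma one_st_D:
  assumes F: "F \<in> ffg D" "F \<subseteq> D" "1 \<in> st F" shows "st F = st D"
proof
  show "st F \<subseteq> st D" using st_mono[OF ffg_Fbar[OF F(1)] subring_Fbar[OF sr] F(2)] .
  have "D \<subseteq> st F" using submod_mult[OF st_submod[OF ffg_Fbar[OF F(1)]] _ F(3)] by auto
  then show "st D \<subseteq> st F" by (rule st_absorb[OF subring_Fbar[OF sr] ffg_Fbar[OF F(1)]])
qed

end

lemma chain_finite_subset:
  assumes "finite G" "G \<subseteq> \<Union>C" "C \<noteq> {}" "\<forall>X\<in>C. \<forall>Y\<in>C. X \<subseteq> Y \<or> Y \<subseteq> X"
  shows "\<exists>J\<in>C. G \<subseteq> J"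
  using assms(1,2)
proof induct
  case empty then show ?case using assms(3) by auto
next
  case (insert g G)
  then obtain J where J: "J \<in> C" "G \<subseteq> J" by auto
  obtain J' where J': "J' \<in> C" "g \<in> J'" using insert(4) by auto
  show ?case using assms(4) J J' by (metis insert_subset subset_trans)
qed

lemma prod_in_ideal:
  assumes sr: "subring D" and P: "ideal_of D P" and ab: "a \<in> D" "b \<in> D" "a * b \<in> P"
    and x: "x \<in> sprod D (P \<union> {a})" and y: "y \<in> sprod D (P \<union> {b})"
  shows "x * y \<in> P"
proof -
  have Pm: "submod D P" and PD: "P \<subseteq> D" using P by (auto simp: ideal_of_def)
  show ?thesis using x
  proof induct
    case zero then show ?case using submod_0[OF Pm] by simp
  next
    case (add x1 x2) then show ?case by (simp add: distrib_right submod_add[OF Pm])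
  next
    case (prod r u)
    show ?case using y
    proof induct
      case zero then show ?case using submod_0[OF Pm] by simp
    next
      case (add y1 y2) then show ?case by (simp add: distrib_left submod_add[OF Pm])
    next
      case (prod s v)
      have uD: "u \<in> D" using prod.hyps(2) \<open>u \<in> P \<union> {a}\<close> PD ab by auto
      have vD: "v \<in> D" using \<open>v \<in> P \<union> {b}\<close> PD ab by auto
      have rs: "r * s \<in> D" using subring_mult[OF sr] \<open>r \<in> D\<close> \<open>s \<in> D\<close> by auto
      have e1: "r * u * (s * v) = (r * s * v) * u" and e2: "r * u * (s * v) = (r * s * u) * v"
        by (simp_all add: algebra_simps)
      have e3: "r * u * (s * v) = (r * s) * (a * b)" if "u = a" "v = b"
        using that by (simp add: algebra_simps)
      consider "u \<in> P" | "v \<in> P" | "u = a" "v = b" using \<open>u \<in> P \<union> {a}\<close> \<open>v \<in> P \<union> {b}\<close> by auto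
      then show ?case
      proof cases
        case 1 then show ?thesis using e1 submod_mult[OF Pm] subring_mult[OF sr rs vD] by metis
      next
        case 2 then show ?thesis using e2 submod_mult[OF Pm] subring_mult[OF sr rs uD] by metis
      next
        case 3 then show ?thesis using e3 submod_mult[OF Pm rs ab(3)] by metis
      qed
    qed
  qed
qed

context sd begin

lemma exists_qprime:
  assumes I: "ideal_of D I" "i0 \<in> I" "i0 \<noteq> 0" "1 \<notin> star_f D st I"
  shows "\<exists>P. quasi_star_prime D (star_f D st) P \<and> I \<subseteq> P"
proof -
  define S where "S = {J. ideal_of D J \<and> I \<subseteq> J \<and> 1 \<notin> star_f D st J}"
  have "\<exists>M\<in>S. \<forall>X\<in>S. M \<subseteq> X \<longrightarrow> X = M"
  proof (rule subset_Zorn_nonempty)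
    show "S \<noteq> {}" using I unfolding S_def by blast
  next
    fix C assume C: "C \<noteq> {}" "subset.chain S C"
    then have CS: "C \<subseteq> S" and ch: "\<forall>X\<in>C. \<forall>Y\<in>C. X \<subseteq> Y \<or> Y \<subseteq> X"
      by (auto simp: subset_chain_def)
    obtain J0 where J0: "J0 \<in> C" using C by auto
    have id: "ideal_of D J" if "J \<in> C" for J using CS that S_def by auto
    have "submod D (\<Union>C)" unfolding submod_def
    proof (intro conjI ballI)
      show "0 \<in> \<Union>C" using id[OF J0] J0 submod_0 by (auto simp: ideal_of_def)
    next
      fix x y assume "x \<in> \<Union>C" "y \<in> \<Union>C"
      then obtain X Y where "X \<in> C" "Y \<in> C" "x \<in> X" "y \<in> Y" by auto
      then show "x + y \<in> \<Union>C" using ch id submod_add unfolding ideal_of_def by (metis UnionI subsetD)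
    next
      fix r x assume "r \<in> D" "x \<in> \<Union>C"
      then show "r * x \<in> \<Union>C" using id submod_mult unfolding ideal_of_def by blast
    qed
    moreover have "\<Union>C \<subseteq> D" using id unfolding ideal_of_def by blast
    moreover have "I \<subseteq> \<Union>C" using J0 CS S_def by auto
    moreover have "1 \<notin> star_f D st (\<Union>C)"
    proof
      assume "1 \<in> star_f D st (\<Union>C)"
      then obtain F where F: "F \<in> ffg D" "F \<subseteq> \<Union>C" "1 \<in> st F" unfolding star_f_def by auto
      then obtain G where G: "finite G" "F = sprod D G" unfolding ffg_def by auto
      have "G \<subseteq> \<Union>C" using F(2) G(2) sprod_gen[OF subring_1[OF sr], of G] by auto
      then obtain J where J: "J \<in> C" "G \<subseteq> J" using chain_finite_subset[OF G(1) _ C(1) ch] by auto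
      have "F \<subseteq> J" unfolding G(2) using id[OF J(1)] J(2) by (intro sprod_subset) (auto simp: ideal_of_def)
      then have "1 \<in> star_f D st J" using star_f_elem F by blast
      then show False using J CS S_def by auto
    qed
    ultimately show "\<Union>C \<in> S" unfolding S_def ideal_of_def by auto
  qed
  then obtain P where PS: "P \<in> S" and Pmax: "\<And>X. X \<in> S \<Longrightarrow> P \<subseteq> X \<Longrightarrow> X = P" by blast
  have Pid: "ideal_of D P" and IP: "I \<subseteq> P" and P1: "1 \<notin> star_f D st P" using PS S_def by auto
  have Pm: "submod D P" and PD: "P \<subseteq> D" using Pid ideal_of_def by auto
  have i0P: "i0 \<in> P" using IP I by auto
  have Pext: "P \<subseteq> star_f D st P" by (rule star_f_ext[OF Pm i0P I(3)])
  have Pne: "P \<noteq> D" using Pext P1 subring_1[OF sr] by auto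
  have Pnz: "P \<noteq> {0}" using i0P I(3) by auto
  define J where "J = star_f D st P \<inter> D"
  have Jm: "submod D J" unfolding J_def using star_f_submod[OF Pm i0P I(3)] subring_submod[OF sr]
    unfolding submod_def by auto
  have "1 \<notin> star_f D st J"
  proof
    assume "1 \<in> star_f D st J"
    then obtain F where F: "F \<in> ffg D" "F \<subseteq> J" "1 \<in> st F" unfolding star_f_def by auto
    then obtain G where G: "finite G" "F = sprod D G" unfolding ffg_def by auto
    have "G \<subseteq> star_f D st P" using F(2) G(2) sprod_gen[OF subring_1[OF sr], of G] J_def by auto
    then obtain F' where F': "F' \<in> ffg D" "F' \<subseteq> P" "G \<subseteq> st F'"
      using star_f_directed[OF Pm i0P I(3) G(1)] by auto
    have "F \<subseteq> st F'" unfolding G(2) using st_submod[OF ffg_Fbar[OF F'(1)]] F'(3)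
      by (intro sprod_subset) auto
    then have "st F \<subseteq> st F'" by (rule st_absorb[OF ffg_Fbar[OF F(1)] ffg_Fbar[OF F'(1)]])
    then show False using F(3) star_f_elem[OF F'(1,2)] P1 by blast
  qed
  then have "J \<in> S" using Jm IP Pext PD unfolding S_def J_def ideal_of_def by auto
  moreover have "P \<subseteq> J" using Pext PD J_def by auto
  ultimately have "J = P" using Pmax by blast
  then have quasi: "star_f D st P \<inter> D = P" using J_def by simp
  have ext_id: "ideal_of D (sprod D (P \<union> {a}))" "P \<subseteq> sprod D (P \<union> {a})" "a \<in> sprod D (P \<union> {a})"
    if "a \<in> D" for a
  proof -
    have "sprod D (P \<union> {a}) \<subseteq> D" by (rule sprod_subset[OF subring_submod[OF sr]]) (use that PD in auto)
    then show "ideal_of D (sprod D (P \<union> {a}))" using sprodD_submod by (simp add: ideal_of_def)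
    show "P \<subseteq> sprod D (P \<union> {a})" "a \<in> sprod D (P \<union> {a})"
      using sprod_gen[OF subring_1[OF sr], of "P \<union> {a}"] by auto
  qed
  have one_ext: "\<exists>F\<in>ffg D. F \<subseteq> sprod D (P \<union> {a}) \<and> 1 \<in> st F" if "a \<in> D" "a \<notin> P" for a
  proof -
    have "sprod D (P \<union> {a}) \<notin> S" using Pmax ext_id[OF that(1)] that(2) by blast
    then have "1 \<in> star_f D st (sprod D (P \<union> {a}))" using ext_id[OF that(1)] IP unfolding S_def by auto
    then show ?thesis unfolding star_f_def by auto
  qed
  have prime: "a \<in> P \<or> b \<in> P" if ab: "a \<in> D" "b \<in> D" "a * b \<in> P" for a b
  proof (rule ccontr)
    assume "\<not> (a \<in> P \<or> b \<in> P)"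
    then obtain F1 F2 where F1: "F1 \<in> ffg D" "F1 \<subseteq> sprod D (P \<union> {a})" "1 \<in> st F1"
      and F2: "F2 \<in> ffg D" "F2 \<subseteq> sprod D (P \<union> {b})" "1 \<in> st F2"
      using one_ext ab by meson
    obtain G1 where G1: "finite G1" "F1 = sprod D G1" using F1(1) unfolding ffg_def by auto
    obtain G2 where G2: "finite G2" "F2 = sprod D G2" using F2(1) unfolding ffg_def by auto
    define H where "H = sprod D ((\<lambda>(u,v). u * v) ` (G1 \<times> G2))"
    have G1s: "G1 \<subseteq> sprod D (P \<union> {a})" using F1(2) G1(2) sprod_gen[OF subring_1[OF sr], of G1] by auto
    have G2s: "G2 \<subseteq> sprod D (P \<union> {b})" using F2(2) G2(2) sprod_gen[OF subring_1[OF sr], of G2] by auto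
    have "(\<lambda>(u,v). u * v) ` (G1 \<times> G2) \<subseteq> P"
      using prod_in_ideal[OF sr Pid ab] G1s G2s by auto
    then have HP: "H \<subseteq> P" unfolding H_def by (intro sprod_subset[OF Pm]) auto
    have "\<not> G1 \<subseteq> {0}"
    proof
      assume "G1 \<subseteq> {0}"
      then have "F1 \<subseteq> {0}" using G1(2) sprod_zero_gens by simp
      then show False using submod_nonzero[OF ffg_Fbar[OF F1(1)]] by blast
    qed
    then obtain u where u: "u \<in> G1" "u \<noteq> 0" by blast
    have "\<not> G2 \<subseteq> {0}"
    proof
      assume "G2 \<subseteq> {0}"
      then have "F2 \<subseteq> {0}" using G2(2) sprod_zero_gens by simp
      then show False using submod_nonzero[OF ffg_Fbar[OF F2(1)]] by blast
    qed
    then obtain v where v: "v \<in> G2" "v \<noteq> 0" by blast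
    have "u * v \<in> (\<lambda>(u,v). u * v) ` (G1 \<times> G2)" using u v by force
    then have "1 * (u * v) \<in> H" unfolding H_def using subring_1[OF sr] by (intro sprod.prod)
    then have "u * v \<in> H" by simp
    moreover have "u * v \<noteq> 0" using u v by simp
    ultimately have "H \<noteq> {0}" by blast
    then have H: "H \<in> ffg D" unfolding H_def using G1 G2 by (intro ffg_I) auto
    have "G2 \<subseteq> st H"
    proof
      fix w assume w: "w \<in> G2"
      show "w \<in> st H"
      proof (cases "w = 0")
        case True then show ?thesis using submod_0[OF st_submod[OF ffg_Fbar[OF H]]] by simp
      next
        case False
        have "w * y \<in> H" if "y \<in> F1" for y
          using that unfolding G1(2)
        proof induct
          case zero then show ?case by (simp add: sprod.zero H_def)
        next
          case (prod r g)
          have e: "w * (r * g) = r * (g * w)" by (simp add: algebra_simps)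
          have "g * w \<in> (\<lambda>(u,v). u * v) ` (G1 \<times> G2)" using prod(2) w by force
          then have "r * (g * w) \<in> H" unfolding H_def by (rule sprod.prod[OF prod(1)])
          then show ?case by (simp only: e)
        next
          case (add y1 y2) then show ?case by (simp add: distrib_left H_def sprod.add)
        qed
        then have "smul w F1 \<subseteq> H" unfolding smul_def by auto
        then have "st (smul w F1) \<subseteq> st H"
          by (intro st_mono smul_Fbar ffg_Fbar F1(1) H False)
        then have "smul w (st F1) \<subseteq> st H" using st_smul[OF False ffg_Fbar[OF F1(1)]] by simp
        then show ?thesis using F1(3) unfolding smul_def by force
      qed
    qed
    then have "F2 \<subseteq> st H" unfolding G2(2) using st_submod[OF ffg_Fbar[OF H]]
      by (intro sprod_subset) auto
    then have "st F2 \<subseteq> st H" by (rule st_absorb[OF ffg_Fbar[OF F2(1)] ffg_Fbar[OF H]])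
    then show False using F2(3) star_f_elem[OF H HP] P1 by blast
  qed
  have "quasi_star_prime D (star_f D st) P"
    unfolding quasi_star_prime_def quasi_star_ideal_def prime_ideal_of_def
    using Pid Pnz quasi Pne prime by blast
  then show ?thesis using IP by blast
qed

end

lemma loc_closed:
  assumes Tsr: "subring T" and DT: "D \<subseteq> T" and Dsr: "subring D" and P: "prime_ideal_of D P"
  shows "sprod T (loc T D P) \<subseteq> loc T D P"
proof -
  have Pm: "submod D P" and PD: "P \<subseteq> D"
    and pr: "\<And>a b. a \<in> D \<Longrightarrow> b \<in> D \<Longrightarrow> a * b \<in> P \<Longrightarrow> a \<in> P \<or> b \<in> P"
    using P by (auto simp: prime_ideal_of_def ideal_of_def)
  have P0: "0 \<in> P" using submod_0[OF Pm] .
  have P1: "1 \<notin> P"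
  proof
    assume "1 \<in> P"
    then have "D \<subseteq> P" using submod_mult[OF Pm] by (metis mult.right_neutral subsetI)
    then show False using P PD by (auto simp: prime_ideal_of_def)
  qed
  have "submod T (loc T D P)" unfolding submod_def
  proof (intro conjI ballI)
    show "0 \<in> loc T D P" unfolding loc_def using subring_0[OF Tsr] subring_1[OF Dsr] P1 by force
  next
    fix x y assume "x \<in> loc T D P" "y \<in> loc T D P"
    then obtain t1 s1 t2 s2 where h: "x = t1 / s1" "t1 \<in> T" "s1 \<in> D" "s1 \<notin> P"
      "y = t2 / s2" "t2 \<in> T" "s2 \<in> D" "s2 \<notin> P" unfolding loc_def by auto
    have nz: "s1 \<noteq> 0" "s2 \<noteq> 0" using h P0 by auto
    have "x + y = (t1 * s2 + t2 * s1) / (s1 * s2)" using nz h by (simp add: field_simps)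
    moreover have "s1 \<in> T" "s2 \<in> T" using h DT by auto
    then have "t1 * s2 + t2 * s1 \<in> T" using h by (simp add: subring_mult[OF Tsr] subring_add[OF Tsr])
    moreover have "s1 * s2 \<in> D" "s1 * s2 \<notin> P" using h pr subring_mult[OF Dsr] by auto
    ultimately show "x + y \<in> loc T D P" unfolding loc_def by blast
  next
    fix r x assume "r \<in> T" "x \<in> loc T D P"
    then obtain t s where h: "x = t / s" "t \<in> T" "s \<in> D" "s \<notin> P" unfolding loc_def by auto
    have "r * x = (r * t) / s" using h by simp
    moreover have "r * t \<in> T" using h \<open>r \<in> T\<close> subring_mult[OF Tsr] by auto
    ultimately show "r * x \<in> loc T D P" using h unfolding loc_def by blast
  qed
  then show ?thesis by (rule sprod_subset) auto
qed

theorem lemma3p14: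
  fixes D T :: "'a::field set"
    and st st' :: "'a set \<Rightarrow> 'a set"
  assumes "domain_with_qf D"
    and "overring D T"
    and "semistar D st"
    and "semistar T st'"
    and "st' T = T"
    and "linked D st T st'"
  shows "ell D st T T = T"
proof -
  have Dsr: "subring D" and qf: "\<And>x. \<exists>a\<in>D. \<exists>b\<in>D. b \<noteq> 0 \<and> x = a / b"
    using assms(1) by (auto simp: domain_with_qf_def)
  have Tsr: "subring T" and DT: "D \<subseteq> T" using assms(2) by (auto simp: overring_def)
  interpret sd D st using assms(3) Dsr by unfold_locales
  interpret T: ssr T st' using assms(4) by unfold_locales
  have TFbar: "T \<in> Fbar T" using subring_Fbar[OF Tsr] .
  show ?thesis
  proof
    show "T \<subseteq> ell D st T T"
    proof
      fix t assume t: "t \<in> T"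
      have "t \<in> sprod T (loc T D P)" if P: "quasi_star_prime D (star_f D st) P" for P
      proof -
        have Pm: "submod D P" and PD: "P \<subseteq> D" and PnD: "P \<noteq> D"
          using P by (auto simp: quasi_star_prime_def prime_ideal_of_def ideal_of_def)
        have "1 \<notin> P"
        proof
          assume "1 \<in> P"
          then have "D \<subseteq> P" using submod_mult[OF Pm] by (metis mult.right_neutral subsetI)
          then show False using PnD PD by auto
        qed
        then have "(1::'a) = 1 / 1 \<and> 1 \<in> T \<and> 1 \<in> D \<and> 1 \<notin> P"
          using subring_1[OF Tsr] subring_1[OF Dsr] by simp
        then have "1 \<in> loc T D P" unfolding loc_def by blast
        then show ?thesis using sprod.prod[OF t, of 1] by simp
      qed
      then show "t \<in> ell D st T T" unfolding ell_def by (intro InterI) auto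
    qed
  next
    show "ell D st T T \<subseteq> T"
    proof
      fix x assume x: "x \<in> ell D st T T"
      show "x \<in> T"
      proof (cases "x = 0")
        case True then show ?thesis using subring_0[OF Tsr] by simp
      next
        case xnz: False
        define I where "I = {d \<in> D. d * x \<in> T}"
        have Im: "submod D I" unfolding submod_def I_def
        proof (intro conjI ballI)
          show "0 \<in> {d \<in> D. d * x \<in> T}" using subring_0[OF Dsr] subring_0[OF Tsr] by simp
        next
          fix a b assume "a \<in> {d \<in> D. d * x \<in> T}" "b \<in> {d \<in> D. d * x \<in> T}"
          then show "a + b \<in> {d \<in> D. d * x \<in> T}"
            using subring_add[OF Dsr] subring_add[OF Tsr] by (auto simp: distrib_right)
        next
          fix r a assume "r \<in> D" "a \<in> {d \<in> D. d * x \<in> T}"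
          then show "r * a \<in> {d \<in> D. d * x \<in> T}"
            using subring_mult[OF Dsr] subring_mult[OF Tsr] DT by (auto simp: mult.assoc)
        qed
        have Iid: "ideal_of D I" using Im by (auto simp: ideal_of_def I_def)
        obtain a b where ab: "a \<in> D" "b \<in> D" "b \<noteq> 0" "x = a / b" using qf by blast
        have bI: "b \<in> I" using ab DT by (auto simp: I_def)
        show ?thesis
        proof (cases "1 \<in> star_f D st I")
          case True
          then obtain F where F: "F \<in> ffg D" "F \<subseteq> I" "1 \<in> st F" unfolding star_f_def by auto
          have FD: "F \<subseteq> D" using F(2) I_def by auto
          have stF: "st F = st D" by (rule one_st_D[OF F(1) FD F(3)])
          obtain G where G: "finite G" "F = sprod D G" using F(1) unfolding ffg_def by auto
          have FF: "F \<in> Fbar D" using ffg_Fbar[OF F(1)] .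
          have Fid: "ideal_of D F" "F \<noteq> {0}" using FF FD by (auto simp: ideal_of_def Fbar_def)
          have lk: "st' (sprod F T) = T"
            using assms(6) Fid G stF assms(5) unfolding linked_def by blast
          obtain f where f: "f \<in> F" "f \<noteq> 0" using submod_nonzero[OF FF] by blast
          have FTm: "submod T (sprod F T)"
            by (rule sprod_submod_right) (auto simp: subring_mult[OF Tsr])
          have "f * 1 \<in> sprod F T" using f subring_1[OF Tsr] by (intro sprod.prod)
          then have FT: "sprod F T \<in> Fbar T" using Fbar_I[OF FTm] f by auto
          have "x * y \<in> T" if "y \<in> sprod F T" for y
            using that
          proof induct
            case zero then show ?case using subring_0[OF Tsr] by simp
          next
            case (prod g t)
            have "x * g \<in> T" using prod(1) F(2) I_def by (auto simp: mult.commute)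
            then have "(x * g) * t \<in> T" using prod(2) subring_mult[OF Tsr] by auto
            then show ?case by (simp add: mult.assoc)
          next
            case (add y1 y2) then show ?case using subring_add[OF Tsr] by (simp add: distrib_left)
          qed
          then have sub: "smul x (sprod F T) \<subseteq> T" unfolding smul_def by auto
          have "st' (smul x (sprod F T)) \<subseteq> st' T"
            by (rule T.st_mono[OF smul_Fbar[OF FT xnz] TFbar sub])
          then have "smul x T \<subseteq> T" using T.st_smul[OF xnz FT] lk assms(5) by simp
          then show ?thesis using subring_1[OF Tsr] unfolding smul_def by force
        next
          case False
          obtain P where P: "quasi_star_prime D (star_f D st) P" "I \<subseteq> P"
            using exists_qprime[OF Iid bI ab(3) False] by blast
          have Pp: "prime_ideal_of D P" using P(1) by (simp add: quasi_star_prime_def)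
          have "x \<in> sprod T (loc T D P)" using x P(1) unfolding ell_def by blast
          then have "x \<in> loc T D P" using loc_closed[OF Tsr DT Dsr Pp] by blast
          then obtain t s where h: "x = t / s" "t \<in> T" "s \<in> D" "s \<notin> P" unfolding loc_def by auto
          have "0 \<in> P" using Pp submod_0 by (auto simp: prime_ideal_of_def ideal_of_def)
          then have "s \<noteq> 0" using h by auto
          then have "s * x = t" using h by simp
          then have "s \<in> I" using h I_def by auto
          then show ?thesis using P(2) h by auto
        qed
      qed
    qed
  qed
qed

end
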